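(* Let $1\leq l<k$ be integers and let $\mathcal{F}$ be a set of $l$-hypergraphs each of which contains two disjoint edges. Then there exists a set $\mathcal{F}'$ of $k$-hypergraphs with $ex(n+k-l,\mathcal{F}')=ex(n,\mathcal{F})$ for all $n$.
   Context: A $k$-hypergraph is a set of vertices together with a collection of $k$-element subsets of the vertices (edges). A hypergraph $X$ contains $G$ as a subgraph if there is an injective map from the vertices of $G$ to those of $X$ mapping edges to edges. For a family $\mathcal{F}$ of hypergraphs of uniformity $l$, $ex(n,\mathcal{F})$ is the maximum number of edges of an $l$-hypergraph on $n$ vertices containing no member of $\mathcal{F}$ as a subgraph. *)

theory Defs
  imports Main
begin

type_synonym 'a hgraph = "'a set \<times> 'a set set"

definition is_hypergraph :: "nat \<Rightarrow> 'a hgraph \<Rightarrow> bool" where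
  "is_hypergraph k G \<longleftrightarrow> finite (fst G) \<and> (\<forall>e\<in>snd G. e \<subseteq> fst G \<and> card e = k)"

definition contains :: "'a hgraph \<Rightarrow> 'b hgraph \<Rightarrow> bool" where
  "contains X G \<longleftrightarrow> (\<exists>f. inj_on f (fst G) \<and> f ` fst G \<subseteq> fst X \<and> (\<forall>e\<in>snd G. f ` e \<in> snd X))"

text \<open>ex n l F: maximum number of edges of an l-hypergraph on n vertices containing no
  member of F (vertex sets taken inside nat, which loses no generality up to isomorphism).\<close>

definition ex :: "nat \<Rightarrow> nat \<Rightarrow> nat hgraph set \<Rightarrow> nat" where
  "ex n l F = Sup {card (snd X) | X :: nat hgraph. is_hypergraph l X \<and> card (fst X) = n \<and> (\<forall>G\<in>F. \<not> contains X G)}"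

end

theory Submission
  imports Defs
begin

definition link :: "nat set \<Rightarrow> nat hgraph \<Rightarrow> nat hgraph" where
  "link S Y = (fst Y - S, (\<lambda>e. e - S) ` snd Y)"

definition Pk :: "nat \<Rightarrow> nat \<Rightarrow> nat hgraph set \<Rightarrow> nat hgraph \<Rightarrow> bool" where
  "Pk k l F Y \<longleftrightarrow> (\<exists>S. card S = k - l \<and> finite S \<and> (\<forall>e\<in>snd Y. S \<subseteq> e)
      \<and> (\<forall>G\<in>F. \<not> contains (link S Y) G))"

lemma hered:
  assumes FE: "\<forall>H\<in>F. snd H \<noteq> {}" and G: "is_hypergraph k G" and P: "Pk k l F Y"
    and C: "contains Y G"
  shows "Pk k l F G"
proof (cases "snd G = {}")
  case True
  show ?thesis unfolding Pk_def
    apply (rule exI[of _ "{0..<k-l}"])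
    using FE True by (auto simp: link_def contains_def)
next
  case False
  then obtain e0 where e0: "e0 \<in> snd G" by auto
  from P obtain S where S: "card S = k-l" "finite S" "\<forall>e\<in>snd Y. S \<subseteq> e"
      "\<forall>H\<in>F. \<not> contains (link S Y) H" by (auto simp: Pk_def)
  from C obtain f where f: "inj_on f (fst G)" "f ` fst G \<subseteq> fst Y" "\<forall>e\<in>snd G. f ` e \<in> snd Y"
    by (auto simp: contains_def)
  have Vfin: "finite (fst G)" and sub: "\<forall>e\<in>snd G. e \<subseteq> fst G"
    using G by (auto simp: is_hypergraph_def)
  define S' where "S' = {x\<in>fst G. f x \<in> S}"
  have SfG: "S \<subseteq> f ` e" if "e \<in> snd G" for e using f(3) S(3) that by blast
  have fS': "f ` S' = S" using SfG[OF e0] sub e0 unfolding S'_def by blast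
  have S'sub: "S' \<subseteq> fst G" unfolding S'_def by auto
  have cardS': "card S' = k - l"
    using card_image[OF inj_on_subset[OF f(1) S'sub]] fS' S(1) by simp
  have S'e: "S' \<subseteq> e" if e: "e \<in> snd G" for e
  proof
    fix x assume x: "x \<in> S'"
    then have "f x \<in> f ` e" using SfG[OF e] unfolding S'_def by blast
    then obtain y where y: "y \<in> e" "f x = f y" by auto
    have "x = y" using inj_onD[OF f(1) y(2)] x y(1) sub e unfolding S'_def by blast
    then show "x \<in> e" using y by simp
  qed
  have img: "f ` (e - S') = f ` e - S" if e: "e \<in> snd G" for e
  proof
    show "f ` (e - S') \<subseteq> f ` e - S" using sub e unfolding S'_def by blast
    show "f ` e - S \<subseteq> f ` (e - S')" using sub e unfolding S'_def by blast
  qed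
  show ?thesis unfolding Pk_def
  proof (intro exI[of _ S'] conjI ballI)
    show "card S' = k - l" by (rule cardS')
    show "finite S'" using Vfin S'sub finite_subset by blast
    show "S' \<subseteq> e" if "e \<in> snd G" for e using S'e that .
    fix H assume H: "H \<in> F"
    show "\<not> contains (link S' G) H"
    proof
      assume "contains (link S' G) H"
      then obtain g where g: "inj_on g (fst H)" "g ` fst H \<subseteq> fst G - S'"
          "\<forall>h\<in>snd H. g ` h \<in> (\<lambda>e. e - S') ` snd G"
        by (auto simp: contains_def link_def)
      have "contains (link S Y) H" unfolding contains_def link_def fst_conv snd_conv
      proof (intro exI[of _ "f \<circ> g"] conjI ballI)
        have "inj_on f (g ` fst H)" using g(2) f(1) inj_on_subset by blast
        then show "inj_on (f \<circ> g) (fst H)" using g(1) comp_inj_on by blast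
        show "(f \<circ> g) ` fst H \<subseteq> fst Y - S" using g(2) f(2) unfolding S'_def by auto
        fix h assume "h \<in> snd H"
        then obtain e where e: "e \<in> snd G" "g ` h = e - S'" using g(3) by auto
        have "(f \<circ> g) ` h = f ` (g ` h)" by (simp add: image_comp)
        also have "\<dots> = f ` e - S" using e img[OF e(1)] by simp
        finally have "(f \<circ> g) ` h = f ` e - S" .
        then show "(f \<circ> g) ` h \<in> (\<lambda>e. e - S) ` snd Y" using f(3) e(1) by auto
      qed
      with S(4) H show False by blast
    qed
  qed
qed

theorem lemma9:
  fixes l k :: nat and F :: "nat hgraph set"
  assumes "1 \<le> l" and "l < k"
    and "\<forall>G\<in>F. is_hypergraph l G"
    and "\<forall>G\<in>F. \<exists>e1\<in>snd G. \<exists>e2\<in>snd G. e1 \<inter> e2 = {}"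
  shows "\<exists>F' :: nat hgraph set. (\<forall>G\<in>F'. is_hypergraph k G) \<and>
           (\<forall>n. ex (n + k - l) k F' = ex n l F)"
proof -
  have FE: "\<forall>H\<in>F. snd H \<noteq> {}" using assms(4) by blast
  define F' where "F' = {Y. is_hypergraph k Y \<and> \<not> Pk k l F Y}"
  have free_iff: "(\<forall>G\<in>F'. \<not> contains Y G) \<longleftrightarrow> Pk k l F Y" if Y: "is_hypergraph k Y" for Y
  proof
    assume a: "\<forall>G\<in>F'. \<not> contains Y G"
    have "contains Y Y" unfolding contains_def by (rule exI[of _ id]) auto
    then show "Pk k l F Y" using a Y unfolding F'_def by blast
  next
    assume "Pk k l F Y"
    then show "\<forall>G\<in>F'. \<not> contains Y G" using hered[OF FE] unfolding F'_def by blast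
  qed
  have empty_ok: "\<forall>G\<in>F. \<not> contains (V, {}) G" for V :: "nat set"
    using FE by (auto simp: contains_def)
  show ?thesis
  proof (intro exI[of _ F'] conjI allI)
    show "\<forall>G\<in>F'. is_hypergraph k G" unfolding F'_def by auto
    fix n
    let ?A' = "{card (snd X) | X :: nat hgraph. is_hypergraph k X \<and> card (fst X) = n + k - l \<and> (\<forall>G\<in>F'. \<not> contains X G)}"
    let ?A = "{card (snd X) | X :: nat hgraph. is_hypergraph l X \<and> card (fst X) = n \<and> (\<forall>G\<in>F. \<not> contains X G)}"
    have "?A' \<subseteq> ?A"
    proof
      fix x assume "x \<in> ?A'"
      then obtain Y :: "nat hgraph" where Y: "x = card (snd Y)" "is_hypergraph k Y" "card (fst Y) = n + k - l"
          "\<forall>G\<in>F'. \<not> contains Y G" by (elim CollectE exE conjE) blast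
      have P: "Pk k l F Y" using free_iff Y(2) Y(4) by blast
      show "x \<in> ?A"
      proof (cases "snd Y = {}")
        case True
        have "is_hypergraph l ({0..<n}, {})" by (simp add: is_hypergraph_def)
        then show ?thesis using True Y(1) empty_ok[of "{0..<n}"]
          by (intro CollectI exI[of _ "({0..<n}, {})"]) auto
      next
        case False
        then obtain e0 where e0: "e0 \<in> snd Y" by auto
        from P obtain S where S: "card S = k-l" "finite S" "\<forall>e\<in>snd Y. S \<subseteq> e"
            "\<forall>H\<in>F. \<not> contains (link S Y) H" by (auto simp: Pk_def)
        have Vfin: "finite (fst Y)" and sub: "\<forall>e\<in>snd Y. e \<subseteq> fst Y \<and> card e = k"
          using Y(2) by (auto simp: is_hypergraph_def)
        have SV: "S \<subseteq> fst Y" using S(3) sub e0 by blast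
        have hg: "is_hypergraph l (link S Y)" unfolding is_hypergraph_def link_def
        proof (intro conjI ballI)
          show "finite (fst (fst Y - S, (\<lambda>e. e - S) ` snd Y))" using Vfin by simp
          fix e' assume "e' \<in> snd (fst Y - S, (\<lambda>e. e - S) ` snd Y)"
          then obtain e where e: "e \<in> snd Y" "e' = e - S" by auto
          show "e' \<subseteq> fst (fst Y - S, (\<lambda>e. e - S) ` snd Y)" using e sub by auto
          have "card (e - S) = card e - card S" using card_Diff_subset S(2) S(3) e(1) by blast
          then show "card e' = l" using e sub S(1) assms(2) by auto
        qed
        have cv: "card (fst (link S Y)) = n" unfolding link_def
          using card_Diff_subset[OF S(2) SV] Y(3) S(1) assms(2) by simp
        have inj: "inj_on (\<lambda>e. e - S) (snd Y)"
          by (rule inj_onI) (use S(3) in blast)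
        have ce: "card (snd (link S Y)) = x" unfolding link_def using card_image[OF inj] Y(1) by simp
        show ?thesis using hg cv ce S(4) by blast
      qed
    qed
    moreover have "?A \<subseteq> ?A'"
    proof
      fix x assume "x \<in> ?A"
      then obtain X :: "nat hgraph" where X: "x = card (snd X)" "is_hypergraph l X" "card (fst X) = n"
          "\<forall>G\<in>F. \<not> contains X G" by (elim CollectE exE conjE) blast
      have Vfin: "finite (fst X)" and sub: "\<forall>e\<in>snd X. e \<subseteq> fst X \<and> card e = l"
        using X(2) by (auto simp: is_hypergraph_def)
      define N where "N = Suc (\<Sum>v\<in>fst X. v)"
      define S where "S = {N..<N + (k - l)}"
      have disj: "fst X \<inter> S = {}"
      proof -
        have "v < N" if "v \<in> fst X" for v
          using member_le_sum[of v "fst X" id] that Vfin unfolding N_def by simp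
        then show ?thesis unfolding S_def by (meson atLeastLessThan_iff disjoint_iff not_le)
      qed
      define Y where "Y = (fst X \<union> S, (\<lambda>e. e \<union> S) ` snd X)"
      have cS: "card S = k - l" "finite S" unfolding S_def by auto
      have eS: "e \<inter> S = {}" if "e \<in> snd X" for e using disj sub that by blast
      have hg: "is_hypergraph k Y" unfolding is_hypergraph_def Y_def
      proof (intro conjI ballI)
        show "finite (fst (fst X \<union> S, (\<lambda>e. e \<union> S) ` snd X))" using Vfin cS by simp
        fix e' assume "e' \<in> snd (fst X \<union> S, (\<lambda>e. e \<union> S) ` snd X)"
        then obtain e where e: "e \<in> snd X" "e' = e \<union> S" by auto
        show "e' \<subseteq> fst (fst X \<union> S, (\<lambda>e. e \<union> S) ` snd X)" using e sub by auto
        have fe: "finite e" using e(1) sub Vfin finite_subset by blast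
        have "card (e \<union> S) = card e + card S" using card_Un_disjoint[OF fe cS(2) eS[OF e(1)]] .
        then show "card e' = k" using e sub cS(1) assms(2) by auto
      qed
      have cv: "card (fst Y) = n + k - l" unfolding Y_def
        using card_Un_disjoint[OF Vfin cS(2) disj] X(3) cS(1) assms(2) by simp
      have inj: "inj_on (\<lambda>e. e \<union> S) (snd X)"
        by (rule inj_onI) (use eS in blast)
      have ce: "card (snd Y) = x" unfolding Y_def using card_image[OF inj] X(1) by simp
      have lk: "link S Y = X"
      proof -
        have a: "fst X \<union> S - S = fst X" using disj by blast
        have b: "(\<lambda>e. e - S) ` (\<lambda>e. e \<union> S) ` snd X = snd X"
        proof -
          have "(\<lambda>e. e - S) ` (\<lambda>e. e \<union> S) ` snd X = (\<lambda>e. e) ` snd X"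
            unfolding image_image by (rule image_cong) (use eS in auto)
          then show ?thesis by simp
        qed
        show ?thesis unfolding link_def Y_def using a b by simp
      qed
      have "Pk k l F Y" unfolding Pk_def
        by (rule exI[of _ S]) (use cS lk X(4) in \<open>auto simp: Y_def\<close>)
      then have "\<forall>G\<in>F'. \<not> contains Y G" using free_iff hg by blast
      then show "x \<in> ?A'" using hg cv ce by blast
    qed
    ultimately have "?A' = ?A" by blast
    then show "ex (n + k - l) k F' = ex n l F" unfolding ex_def by simp
  qed
qed

end
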